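(* Let $f:\mathbb{R}^d\to\mathbb{R}$ be SPB with parameters $\mathrm{R}_1,\mathrm{R}_2,m$, let $\sigma>0$ and $f_\sigma(x)=\mathbb{E}_{u\sim\mathcal{N}(0,I)}[f(x+\sigma u)]$. Then \[|f_\sigma(x)-f(x)|\le\mathcal{M}(x)\cdot\sigma\qquad\forall x\in\mathbb{R}^d,\] where $\mathcal{M}(x)=(2^{m-1}\mathrm{R}_1\|x\|^m+\mathrm{R}_2)\sqrt d+2^{m-1}\mathrm{R}_1\sigma^m(m+1+d)^{(m+1)/2}$.
   Context: $\mathcal{N}(0,I)$ is the $d$-dimensional standard Gaussian distribution; $\|\cdot\|$ the Euclidean norm. $f$ is SPB with parameters $\mathrm{R}_1\ge0$, $\mathrm{R}_2>0$, integer $m\ge0$ (with $\mathrm{R}_1=0$ iff $m=0$) if $f$ is locally Lipschitz and $\sup_{\zeta\in\partial_Cf(x)}\|\zeta\|\le\mathrm{R}_1\|x\|^m+\mathrm{R}_2$ for all $x$, where $\partial_C f$ is the Clarke subdifferential (convention $0^0=1$). *)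

theory Defs
  imports "HOL-Analysis.Analysis" "HOL-Probability.Probability"
begin

definition loc_lipschitz :: "('a::euclidean_space \<Rightarrow> real) \<Rightarrow> bool" where
  "loc_lipschitz f \<longleftrightarrow>
     (\<forall>x. \<exists>e>0. \<exists>L. \<forall>y\<in>ball x e. \<forall>z\<in>ball x e. \<bar>f y - f z\<bar> \<le> L * dist y z)"

definition clarke_dir_deriv :: "('a::euclidean_space \<Rightarrow> real) \<Rightarrow> 'a \<Rightarrow> 'a \<Rightarrow> ereal" where
  "clarke_dir_deriv f x v =
     Limsup (nhds x \<times>\<^sub>F at_right (0::real)) (\<lambda>(y, t). ereal ((f (y + t *\<^sub>R v) - f y) / t))"

definition clarke_subdiff :: "('a::euclidean_space \<Rightarrow> real) \<Rightarrow> 'a \<Rightarrow> 'a set" where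
  "clarke_subdiff f x = {\<zeta>. \<forall>v. ereal (\<zeta> \<bullet> v) \<le> clarke_dir_deriv f x v}"

text \<open>SPB with parameters R1, R2, m (with R1 = 0 iff m = 0).  Note 0^0 = 1 in Isabelle.\<close>
definition SPB :: "('a::euclidean_space \<Rightarrow> real) \<Rightarrow> real \<Rightarrow> real \<Rightarrow> nat \<Rightarrow> bool" where
  "SPB f R1 R2 m \<longleftrightarrow> R1 \<ge> 0 \<and> R2 > 0 \<and> (R1 = 0 \<longleftrightarrow> m = 0) \<and> loc_lipschitz f \<and>
     (\<forall>x. \<forall>\<zeta>\<in>clarke_subdiff f x. norm \<zeta> \<le> R1 * norm x ^ m + R2)"

definition std_gaussian :: "'a::euclidean_space measure" where
  "std_gaussian = density lborel
     (\<lambda>u. ennreal ((2 * pi) powr (- real DIM('a) / 2) * exp (- (norm u)\<^sup>2 / 2)))"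

definition gauss_smooth :: "('a::euclidean_space \<Rightarrow> real) \<Rightarrow> real \<Rightarrow> 'a \<Rightarrow> real" where
  "gauss_smooth f \<sigma> x = (\<integral>u. f (x + \<sigma> *\<^sub>R u) \<partial>std_gaussian)"

end

theory Submission
  imports Defs
begin


lemma norm_sq_basis: "(norm (u::'a::euclidean_space))\<^sup>2 = (\<Sum>b\<in>Basis. (u \<bullet> b)\<^sup>2)"
proof -
  have "(norm u)\<^sup>2 = u \<bullet> u" by (simp add: power2_norm_eq_inner)
  also have "\<dots> = (\<Sum>b\<in>Basis. (u \<bullet> b)\<^sup>2)" by (subst euclidean_inner) (simp add: power2_eq_square)
  finally show ?thesis .
qed

lemma gauss1d:
  assumes a: "a > 0"
  shows "(\<integral>\<^sup>+x. ennreal ((2*pi) powr (-1/2) * exp (- a * x\<^sup>2 / 2)) \<partial>lborel) = ennreal (a powr (-1/2))"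
proof -
  define s where "s = 1 / sqrt a"
  have s: "s > 0" using a by (simp add: s_def)
  have eq: "(2*pi) powr (-1/2) * exp (- a * x\<^sup>2 / 2) = s * normal_density 0 s x" for x
  proof -
    have "s\<^sup>2 = 1/a" using a by (simp add: s_def power_divide)
    moreover have "sqrt (2 * pi * s\<^sup>2) = sqrt (2 * pi) * s" using s by (simp add: real_sqrt_mult)
    moreover have "(2*pi) powr (-1/2) = 1 / sqrt (2*pi)"
      by (simp add: powr_minus_divide powr_half_sqrt[symmetric] )
    moreover have "x\<^sup>2 / (2 * s\<^sup>2) = a * x\<^sup>2 / 2" using \<open>s\<^sup>2 = 1/a\<close> a s by (simp add: field_simps)
    ultimately have "s * normal_density 0 s x = s * (1 / (sqrt (2 * pi) * s) * exp (- (a * x\<^sup>2 / 2)))"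
      unfolding normal_density_def by simp
    also have "\<dots> = 1 / sqrt (2*pi) * exp (- (a * x\<^sup>2 / 2))" using s by simp
    finally show ?thesis using \<open>(2*pi) powr (-1/2) = 1 / sqrt (2*pi)\<close> by simp
  qed
  have "(\<integral>\<^sup>+x. ennreal ((2*pi) powr (-1/2) * exp (- a * x\<^sup>2 / 2)) \<partial>lborel)
      = (\<integral>\<^sup>+x. ennreal s * ennreal (normal_density 0 s x) \<partial>lborel)"
    using s by (simp only: eq ennreal_mult[OF less_imp_le[OF s] normal_density_nonneg])
  also have "\<dots> = ennreal s * (\<integral>\<^sup>+x. ennreal (normal_density 0 s x) \<partial>lborel)"
    by (rule nn_integral_cmult) simp
  also have "(\<integral>\<^sup>+x. ennreal (normal_density 0 s x) \<partial>lborel) = 1"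
    using integrable_normal_density[OF s] integral_normal_density[OF s] by (subst nn_integral_eq_integral) (auto simp: normal_density_nonneg)
  finally show ?thesis using a by (simp add: s_def powr_minus_divide powr_half_sqrt)
qed

lemma gauss1d_sq:
  "(\<integral>\<^sup>+x. ennreal ((2*pi) powr (-1/2) * exp (- 1 * x\<^sup>2 / 2) * x\<^sup>2) \<partial>lborel) = 1"
proof -
  have "(\<lambda>x. (2*pi) powr (-1/2) * exp (- 1 * x\<^sup>2 / 2) * x\<^sup>2) = (\<lambda>x. std_normal_density x * x ^ (2*1))"
    by (rule ext) (simp add: std_normal_density_def powr_minus_divide powr_half_sqrt)
  moreover have "(\<integral>\<^sup>+x. ennreal (std_normal_density x * x ^ (2*1)) \<partial>lborel) = 1"
    using std_normal_moment_even[of 1]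
    by (subst nn_integral_eq_integral) (auto simp: has_bochner_integral_iff normal_density_nonneg)
  ultimately show ?thesis by metis
qed

definition h0 :: "real \<Rightarrow> real" where "h0 x = (2*pi) powr (-1/2) * exp (- 1 * x\<^sup>2 / 2)"

lemma gdens_prod:
  "(2 * pi) powr (- real DIM('a) / 2) * exp (- (norm (u::'a::euclidean_space))\<^sup>2 / 2)
    = (\<Prod>b\<in>Basis. h0 (u \<bullet> b))"
proof -
  have "(\<Prod>b\<in>Basis. h0 (u \<bullet> b)) = ((2*pi) powr (-1/2)) ^ DIM('a) * (\<Prod>b\<in>Basis. exp (- 1 * (u \<bullet> b)\<^sup>2 / 2))"
    by (simp add: h0_def prod.distrib)
  also have "((2*pi) powr (-1/2)) ^ DIM('a) = (2 * pi) powr (- real DIM('a) / 2)"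
    by (simp add: powr_realpow[symmetric] powr_powr)
  also have "(\<Prod>b\<in>Basis. exp (- 1 * (u \<bullet> b)\<^sup>2 / 2)) = exp (\<Sum>b\<in>Basis. - 1 * (u \<bullet> b)\<^sup>2 / 2)"
    by (simp add: exp_sum)
  also have "(\<Sum>b\<in>Basis. - 1 * (u \<bullet> b)\<^sup>2 / 2) = - (norm u)\<^sup>2 / 2"
    by (simp add: norm_sq_basis sum_divide_distrib[symmetric] sum_negf)
  finally show ?thesis by simp
qed

lemma h0_nonneg: "h0 x \<ge> 0" by (simp add: h0_def)

lemma nn_integral_std_gaussian:
  assumes [measurable]: "g \<in> borel_measurable borel"
  shows "(\<integral>\<^sup>+u. g u \<partial>(std_gaussian::'a::euclidean_space measure))
       = (\<integral>\<^sup>+u. ennreal (\<Prod>b\<in>Basis. h0 (u \<bullet> b)) * g u \<partial>lborel)"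
proof -
  have m: "(\<lambda>u::'a. ennreal ((2 * pi) powr (- real DIM('a) / 2) * exp (- (norm u)\<^sup>2 / 2))) \<in> borel_measurable lborel"
    by measurable
  show ?thesis unfolding std_gaussian_def nn_integral_density[OF m assms[simplified measurable_lborel2[symmetric]]]
    by (simp only: gdens_prod)
qed

lemma gauss_mgf:
  assumes t: "\<tau> < 1"
  shows "(\<integral>\<^sup>+u. ennreal (exp (\<tau> * (norm u)\<^sup>2 / 2)) \<partial>(std_gaussian::'a::euclidean_space measure))
        = ennreal ((1 - \<tau>) powr (- real DIM('a) / 2))"
proof -
  have eq: "ennreal (\<Prod>b\<in>Basis. h0 (u \<bullet> b)) * ennreal (exp (\<tau> * (norm u)\<^sup>2 / 2))
     = (\<Prod>b\<in>Basis. ennreal ((2*pi) powr (-1/2) * exp (- (1 - \<tau>) * (u \<bullet> b)\<^sup>2 / 2)))" for u :: 'a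
  proof -
    have "exp (\<tau> * (norm u)\<^sup>2 / 2) = (\<Prod>b\<in>Basis. exp (\<tau> * (u \<bullet> b)\<^sup>2 / 2))"
      by (simp add: norm_sq_basis exp_sum[symmetric] sum_distrib_left sum_divide_distrib[symmetric])
    then have "(\<Prod>b\<in>Basis. h0 (u \<bullet> b)) * exp (\<tau> * (norm u)\<^sup>2 / 2)
        = (\<Prod>b\<in>Basis. (2*pi) powr (-1/2) * exp (- (1 - \<tau>) * (u \<bullet> b)\<^sup>2 / 2))"
    proof -
      have "h0 x * exp (\<tau> * x\<^sup>2 / 2) = (2*pi) powr (-1/2) * exp (- (1 - \<tau>) * x\<^sup>2 / 2)" for x
        by (simp add: h0_def mult.assoc exp_add[symmetric] field_simps)
      then show ?thesis using \<open>exp (\<tau> * (norm u)\<^sup>2 / 2) = (\<Prod>b\<in>Basis. exp (\<tau> * (u \<bullet> b)\<^sup>2 / 2))\<close> by (simp add: prod.distrib[symmetric])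
    qed
    then show ?thesis
      by (simp add: ennreal_mult[symmetric] prod_nonneg h0_nonneg prod_ennreal)
  qed
  have "(\<integral>\<^sup>+u. ennreal (exp (\<tau> * (norm u)\<^sup>2 / 2)) \<partial>(std_gaussian::'a measure))
     = (\<integral>\<^sup>+(u::'a). (\<Prod>b\<in>Basis. ennreal ((2*pi) powr (-1/2) * exp (- (1 - \<tau>) * (u \<bullet> b)\<^sup>2 / 2))) \<partial>lborel)"
    by (subst nn_integral_std_gaussian) (simp_all add: eq)
  also have "\<dots> = (\<Prod>b\<in>(Basis::'a set). ennreal ((1 - \<tau>) powr (-1/2)))"
  proof -
    have g: "(\<integral>\<^sup>+x. ennreal ((2*pi) powr (-1/2) * exp (- (1-\<tau>) * x\<^sup>2 / 2)) \<partial>lborel) = ennreal ((1-\<tau>) powr (-1/2))"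
      using gauss1d[of "1-\<tau>"] t by simp
    show ?thesis
      by (subst nn_integral_lborel_prod) (simp_all only: g, simp_all)
  qed
  also have "\<dots> = ennreal ((1 - \<tau>) powr (- real DIM('a) / 2))"
    using t by (simp add: ennreal_power powr_realpow[symmetric] powr_powr)
  finally show ?thesis .
qed

lemma gauss_second:
  "(\<integral>\<^sup>+u. ennreal ((norm u)\<^sup>2) \<partial>(std_gaussian::'a::euclidean_space measure)) = real DIM('a)"
proof -
  have eq: "ennreal (\<Prod>b\<in>Basis. h0 (u \<bullet> b)) * ennreal ((norm u)\<^sup>2)
     = (\<Sum>c\<in>Basis. (\<Prod>b\<in>Basis. ennreal (if b = c then h0 (u \<bullet> b) * (u \<bullet> b)\<^sup>2 else h0 (u \<bullet> b))))" for u :: 'a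
  proof -
    have "(\<Prod>b\<in>Basis. h0 (u \<bullet> b)) * (norm u)\<^sup>2
       = (\<Sum>c\<in>Basis. (\<Prod>b\<in>Basis. (if b = c then h0 (u \<bullet> b) * (u \<bullet> b)\<^sup>2 else h0 (u \<bullet> b))))"
    proof -
      have "(\<Prod>b\<in>Basis. (if b = c then h0 (u \<bullet> b) * (u \<bullet> b)\<^sup>2 else h0 (u \<bullet> b)))
          = (\<Prod>b\<in>Basis. h0 (u \<bullet> b)) * (u \<bullet> c)\<^sup>2" if c: "c \<in> Basis" for c
      proof -
        have "(\<Prod>b\<in>Basis. (if b = c then h0 (u \<bullet> b) * (u \<bullet> b)\<^sup>2 else h0 (u \<bullet> b)))
           = (\<Prod>b\<in>Basis. h0 (u \<bullet> b) * (if b = c then (u \<bullet> b)\<^sup>2 else 1))"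
          by (rule prod.cong) auto
        also have "\<dots> = (\<Prod>b\<in>Basis. h0 (u \<bullet> b)) * (u \<bullet> c)\<^sup>2"
          using c by (simp add: prod.distrib prod.delta)
        finally show ?thesis .
      qed
      then show ?thesis by (simp add: norm_sq_basis sum_distrib_left)
    qed
    then show ?thesis
      by (simp add: ennreal_mult[symmetric] prod_nonneg h0_nonneg prod_ennreal sum_nonneg)
  qed
  have "(\<integral>\<^sup>+u. ennreal ((norm u)\<^sup>2) \<partial>(std_gaussian::'a measure))
     = (\<integral>\<^sup>+(u::'a). (\<Sum>c\<in>Basis. (\<Prod>b\<in>Basis. ennreal (if b = c then h0 (u \<bullet> b) * (u \<bullet> b)\<^sup>2 else h0 (u \<bullet> b)))) \<partial>lborel)"
    by (subst nn_integral_std_gaussian) (simp_all add: eq)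
  also have "\<dots> = (\<Sum>c\<in>(Basis::'a set). (\<Prod>b\<in>(Basis::'a set). 1))"
  proof (subst nn_integral_sum)
    show "\<And>c. c \<in> Basis \<Longrightarrow> (\<lambda>u::'a. (\<Prod>b\<in>Basis. ennreal (if b = c then h0 (u \<bullet> b) * (u \<bullet> b)\<^sup>2 else h0 (u \<bullet> b)))) \<in> borel_measurable lborel"
      unfolding h0_def by measurable
    show "(\<Sum>c\<in>Basis. \<integral>\<^sup>+(u::'a). (\<Prod>b\<in>Basis. ennreal (if b = c then h0 (u \<bullet> b) * (u \<bullet> b)\<^sup>2 else h0 (u \<bullet> b))) \<partial>lborel) = (\<Sum>c\<in>(Basis::'a set). (\<Prod>b\<in>(Basis::'a set). 1))"
    proof (rule sum.cong[OF refl])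
    fix c :: 'a assume "c \<in> Basis"
    have 1: "(\<integral>\<^sup>+x. ennreal (h0 x) \<partial>lborel) = 1"
      using gauss1d[of 1] by (simp add: h0_def)
    have 2: "(\<integral>\<^sup>+x. ennreal (h0 x * x\<^sup>2) \<partial>lborel) = 1"
      using gauss1d_sq by (simp add: h0_def)
    show "(\<integral>\<^sup>+u. (\<Prod>b\<in>Basis. ennreal (if b = c then h0 (u \<bullet> b) * (u \<bullet> b)\<^sup>2 else h0 (u \<bullet> b))) \<partial>lborel) = (\<Prod>b\<in>Basis. 1)"
    proof -
      have m: "\<And>b. b \<in> Basis \<Longrightarrow> (\<lambda>x. ennreal (if b = c then h0 x * x\<^sup>2 else h0 x)) \<in> borel_measurable borel"
        unfolding h0_def by measurable
      have e: "(\<integral>\<^sup>+x. ennreal (if b = c then h0 x * x\<^sup>2 else h0 x) \<partial>lborel) = 1" for b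
        by (cases "b = c") (simp_all add: 1 2)
      show ?thesis
        using nn_integral_lborel_prod[of "\<lambda>b x. ennreal (if b = c then h0 x * x\<^sup>2 else h0 x)", OF m]
        by (simp add: e)
    qed
  qed
  qed
  finally show ?thesis by (simp add: ennreal_of_nat_eq_real_of_nat)
qed



lemma sets_std_gaussian[measurable_cong]: "sets (std_gaussian::'a::euclidean_space measure) = sets borel"
  by (simp add: std_gaussian_def)

lemma pow_bound_pt:
  fixes r K n :: real and k :: nat
  assumes r: "r \<ge> 0" and K: "K = real k" and n: "n > 0" and k: "k \<ge> 1"
  shows "r ^ k \<le> (K + n) powr (K/2) * exp (- K/2) * exp ((K/(K+n)) * r\<^sup>2 / 2)"
proof -
  define y where "y = r\<^sup>2 / (K + n)"
  have Kn: "K + n > 0" using K n by simp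
  have y0: "y \<ge> 0" using Kn by (simp add: y_def)
  have "y \<le> exp (y - 1)" using exp_ge_add_one_self[of "y - 1"] by simp
  then have "y powr (K/2) \<le> exp (y - 1) powr (K/2)"
    using y0 K by (intro powr_mono2) auto
  also have "\<dots> = exp ((K/(K+n)) * r\<^sup>2 / 2 - K/2)"
    using Kn by (simp add: powr_def y_def field_simps)
  finally have 1: "y powr (K/2) \<le> exp ((K/(K+n)) * r\<^sup>2 / 2 - K/2)" .
  have "r ^ k = (r\<^sup>2) powr (K/2)"
  proof (cases "r = 0")
    case True
    have "k \<noteq> 0" using k by simp
    then show ?thesis using True by simp
  next
    case False
    then have rp: "r > 0" using r by simp
    have "r\<^sup>2 = r powr 2" using rp by (simp add: powr_numeral)
    then have "(r\<^sup>2) powr (K/2) = r powr (2 * (K/2))" by (simp add: powr_powr)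
    also have "\<dots> = r powr K" by simp
    finally have "(r\<^sup>2) powr (K/2) = r powr K" .
    also have "\<dots> = r ^ k" using False r K by (simp add: powr_realpow)
    finally show ?thesis by simp
  qed
  also have "r\<^sup>2 = (K + n) * y" using Kn by (simp add: y_def)
  also have "((K + n) * y) powr (K/2) = (K + n) powr (K/2) * y powr (K/2)"
    using Kn y0 by (simp add: powr_mult)
  also have "\<dots> \<le> (K + n) powr (K/2) * exp ((K/(K+n)) * r\<^sup>2 / 2 - K/2)"
    using 1 by (intro mult_left_mono) auto
  also have "\<dots> = (K + n) powr (K/2) * exp (- K/2) * exp ((K/(K+n)) * r\<^sup>2 / 2)"
  proof -
    have ee: "exp ((K/(K+n)) * r\<^sup>2 / 2 - K/2) = exp (- K/2) * exp ((K/(K+n)) * r\<^sup>2 / 2)"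
      by (simp add: exp_add[symmetric])
    show ?thesis unfolding ee by (simp add: mult.assoc)
  qed
  finally show ?thesis .
qed

lemma const_bound:
  fixes K n :: real
  assumes K: "K \<ge> 0" and n: "n > 0"
  shows "exp (- K/2) * (1 - K/(K+n)) powr (- n/2) \<le> 1"
proof -
  have Kn: "K + n > 0" using K n by simp
  have "1 - K/(K+n) = n/(K+n)" using Kn by (simp add: field_simps)
  then have "(1 - K/(K+n)) powr (- n/2) = (1 + K/n) powr (n/2)"
    using Kn n by (simp add: powr_minus_divide powr_divide field_simps)
  also have "\<dots> \<le> exp (K/n) powr (n/2)"
    using K n exp_ge_add_one_self[of "K/n"] by (intro powr_mono2) auto
  also have "\<dots> = exp (K/2)" using n by (simp add: powr_def)
  finally show ?thesis by (simp add: exp_minus field_simps)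
qed

lemma prob_space_std_gaussian: "prob_space (std_gaussian :: 'a::euclidean_space measure)"
proof
  have "emeasure (std_gaussian::'a measure) (space std_gaussian) = (\<integral>\<^sup>+u. 1 \<partial>(std_gaussian::'a measure))"
    by simp
  also have "\<dots> = (\<integral>\<^sup>+u. ennreal (exp (0 * (norm u)\<^sup>2 / 2)) \<partial>(std_gaussian::'a measure))" by simp
  also have "\<dots> = 1" by (subst gauss_mgf) simp_all
  finally show "emeasure (std_gaussian::'a measure) (space std_gaussian) = 1" .
qed

lemma gauss_moment:
  assumes "k \<ge> 1"
  shows "(\<integral>\<^sup>+u. ennreal (norm u ^ k) \<partial>(std_gaussian::'a::euclidean_space measure))
     \<le> ennreal ((real k + real DIM('a)) powr (real k / 2))"
proof -
  define K where "K = real k"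
  define n where "n = real DIM('a)"
  define \<tau> where "\<tau> = K / (K + n)"
  have n: "n > 0" by (simp add: n_def)
  have K: "K \<ge> 0" by (simp add: K_def)
  have t: "\<tau> < 1" using n K by (simp add: \<tau>_def)
  define C where "C = (K + n) powr (K/2) * exp (- K/2)"
  have C: "C \<ge> 0" by (simp add: C_def)
  have "(\<integral>\<^sup>+u. ennreal (norm u ^ k) \<partial>(std_gaussian::'a measure))
      \<le> (\<integral>\<^sup>+u. ennreal C * ennreal (exp (\<tau> * (norm u)\<^sup>2 / 2)) \<partial>(std_gaussian::'a measure))"
  proof (intro nn_integral_mono)
    fix u :: 'a
    have "norm u ^ k \<le> C * exp (\<tau> * (norm u)\<^sup>2 / 2)"
      unfolding C_def \<tau>_def by (rule pow_bound_pt[OF norm_ge_zero K_def n assms])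
    then show "ennreal (norm u ^ k) \<le> ennreal C * ennreal (exp (\<tau> * (norm u)\<^sup>2 / 2))"
      using C by (simp add: ennreal_mult[symmetric] ennreal_leI)
  qed
  also have "\<dots> = ennreal C * ennreal ((1 - \<tau>) powr (- n / 2))"
    using t by (subst nn_integral_cmult) (simp_all add: gauss_mgf n_def)
  also have "\<dots> = ennreal ((K + n) powr (K/2) * (exp (- K/2) * (1 - \<tau>) powr (- n / 2)))"
    using C by (simp add: ennreal_mult[symmetric] C_def mult.assoc del: ennreal_mult')
  also have "\<dots> \<le> ennreal ((K + n) powr (K/2))"
  proof (intro ennreal_leI mult_left_le)
    show "exp (- K/2) * (1 - \<tau>) powr (- n / 2) \<le> 1" unfolding \<tau>_def by (rule const_bound[OF K n])
  qed simp
  finally show ?thesis by (simp add: K_def n_def)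
qed



lemma loc_lip_at:
  assumes "loc_lipschitz f"
  obtains e L where "e > 0" "L \<ge> 0" "\<And>y w. y \<in> ball z e \<Longrightarrow> w \<in> ball z e \<Longrightarrow> \<bar>f y - f w\<bar> \<le> L * dist y w"
proof -
  obtain e L where e: "e > 0" and L: "\<forall>y\<in>ball z e. \<forall>w\<in>ball z e. \<bar>f y - f w\<bar> \<le> L * dist y w"
    using assms unfolding loc_lipschitz_def by blast
  show ?thesis
  proof (rule that[OF e, of "max L 0"])
    fix y w assume "y \<in> ball z e" "w \<in> ball z e"
    then have "\<bar>f y - f w\<bar> \<le> L * dist y w" using L by blast
    also have "\<dots> \<le> max L 0 * dist y w" by (intro mult_right_mono) auto
    finally show "\<bar>f y - f w\<bar> \<le> max L 0 * dist y w" .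
  qed simp
qed

lemma loc_lip_cont:
  assumes "loc_lipschitz f"
  shows "continuous_on UNIV f"
proof -
  have "isCont f z" for z
  proof -
    obtain e L where e: "e > 0" and L: "L \<ge> 0"
      and lip: "\<And>y w. y \<in> ball z e \<Longrightarrow> w \<in> ball z e \<Longrightarrow> \<bar>f y - f w\<bar> \<le> L * dist y w"
      using loc_lip_at[OF assms] by blast
    show ?thesis unfolding isCont_def LIM_eq
    proof (intro allI impI)
      fix r :: real assume r: "r > 0"
      show "\<exists>s>0. \<forall>x. x \<noteq> z \<and> norm (x - z) < s \<longrightarrow> norm (f x - f z) < r"
      proof (intro exI[of _ "min e (r / (L + 1))"] conjI allI impI)
        show "min e (r / (L + 1)) > 0" using e r L by simp
        fix x assume x: "x \<noteq> z \<and> norm (x - z) < min e (r / (L + 1))"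
        then have "x \<in> ball z e" by (simp add: dist_norm norm_minus_commute)
        then have "\<bar>f x - f z\<bar> \<le> L * dist x z" using lip e by simp
        also have "\<dots> \<le> L * (r / (L + 1))" using x L by (intro mult_left_mono) (auto simp: dist_norm)
        also have "\<dots> < r" using L r by (simp add: field_simps)
        finally show "norm (f x - f z) < r" by simp
      qed
    qed
  qed
  then show ?thesis by (simp add: continuous_on_eq_continuous_at)
qed

lemma quot_bound:
  assumes "loc_lipschitz f"
  shows "\<exists>K. eventually (\<lambda>p. \<bar>(f (fst p + snd p *\<^sub>R v) - f (fst p)) / snd p\<bar> \<le> K) (nhds z \<times>\<^sub>F at_right (0::real))"
proof -
  obtain e L where e: "e > 0" and L: "L \<ge> 0"
    and lip: "\<And>y w. y \<in> ball z e \<Longrightarrow> w \<in> ball z e \<Longrightarrow> \<bar>f y - f w\<bar> \<le> L * dist y w"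
    using loc_lip_at[OF assms] by blast
  define b where "b = e / (2 * (norm v + 1))"
  have nv: "2 * (norm v + 1) > 0" using norm_ge_zero[of v] by (smt (verit))
  have b: "b > 0" using e nv unfolding b_def by (rule divide_pos_pos)
  have "eventually (\<lambda>p. \<bar>(f (fst p + snd p *\<^sub>R v) - f (fst p)) / snd p\<bar> \<le> L * norm v) (nhds z \<times>\<^sub>F at_right (0::real))"
    unfolding eventually_prod_filter
  proof (intro exI conjI allI impI)
    show "eventually (\<lambda>y. y \<in> ball z (e/2)) (nhds z)" using e by (intro eventually_nhds_ball) simp
    show "eventually (\<lambda>t. 0 < t \<and> t < b) (at_right (0::real))"
      unfolding eventually_at_right_field using b by auto
    fix y t assume y: "y \<in> ball z (e/2)" and t: "0 < t \<and> t < b"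
    have "t * norm v < e / 2"
    proof -
      have "t * norm v \<le> b * norm v" using t by (intro mult_right_mono) auto
      also have "\<dots> = (e/2) * (norm v / (norm v + 1))" unfolding b_def by (simp add: field_simps)
      also have "\<dots> < (e/2) * 1"
        using e nv by (intro mult_strict_left_mono) (auto simp: divide_less_eq)
      finally show ?thesis by simp
    qed
    then have "dist z (y + t *\<^sub>R v) < e"
    proof -
      have "dist z (y + t *\<^sub>R v) \<le> dist z y + dist y (y + t *\<^sub>R v)"
        by (rule dist_triangle)
      also have "dist y (y + t *\<^sub>R v) = t * norm v" using t by (simp add: dist_norm)
      finally have "dist z (y + t *\<^sub>R v) \<le> dist z y + t * norm v" .
      moreover have "dist z y < e / 2" using y by simp
      ultimately show ?thesis using \<open>t * norm v < e / 2\<close> by linarith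
    qed
    moreover have "y \<in> ball z e" using y e by auto
    ultimately have "\<bar>f (y + t *\<^sub>R v) - f y\<bar> \<le> L * dist (y + t *\<^sub>R v) y"
      using lip by simp
    also have "dist (y + t *\<^sub>R v) y = t * norm v" using t by (simp add: dist_norm)
    finally have "\<bar>f (y + t *\<^sub>R v) - f y\<bar> \<le> L * (t * norm v)" .
    then show "\<bar>(f (fst (y, t) + snd (y, t) *\<^sub>R v) - f (fst (y, t))) / snd (y, t)\<bar> \<le> L * norm v"
    proof -
      have "\<bar>(f (y + t *\<^sub>R v) - f y) / t\<bar> = \<bar>f (y + t *\<^sub>R v) - f y\<bar> / t" using t by (simp add: abs_divide)
      also have "\<dots> \<le> L * norm v" using t \<open>\<bar>f (y + t *\<^sub>R v) - f y\<bar> \<le> L * (t * norm v)\<close>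
        by (simp add: pos_divide_le_eq mult_ac)
      finally show ?thesis by simp
    qed
  qed
  then show ?thesis by blast
qed

definition Qf :: "('a::euclidean_space \<Rightarrow> real) \<Rightarrow> 'a \<Rightarrow> 'a \<times> real \<Rightarrow> real" where
  "Qf f v p = (f (fst p + snd p *\<^sub>R v) - f (fst p)) / snd p"

abbreviation FF :: "'a::euclidean_space \<Rightarrow> ('a \<times> real) filter" where
  "FF z \<equiv> nhds z \<times>\<^sub>F at_right (0::real)"

lemma cdd_alt: "clarke_dir_deriv f z v = Limsup (FF z) (\<lambda>p. ereal (Qf f v p))"
  unfolding clarke_dir_deriv_def Qf_def by (simp add: case_prod_beta')

lemma FF_nontriv: "FF z \<noteq> bot"
  by (simp add: prod_filter_eq_bot)

lemma cdd_finite: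
  assumes "loc_lipschitz f"
  shows "\<bar>clarke_dir_deriv f z v\<bar> \<noteq> \<infinity>"
proof -
  obtain K where K: "eventually (\<lambda>p. \<bar>Qf f v p\<bar> \<le> K) (FF z)"
    using quot_bound[OF assms, of v z] unfolding Qf_def by blast
  have "Limsup (FF z) (\<lambda>p. ereal (Qf f v p)) \<le> ereal K"
    by (rule Limsup_bounded) (use K in \<open>eventually_elim, auto\<close>)
  moreover have "ereal (- K) \<le> Liminf (FF z) (\<lambda>p. ereal (Qf f v p))"
    by (rule Liminf_bounded) (use K in \<open>eventually_elim, auto\<close>)
  moreover have "Liminf (FF z) (\<lambda>p. ereal (Qf f v p)) \<le> Limsup (FF z) (\<lambda>p. ereal (Qf f v p))"
    by (rule Liminf_le_Limsup) (simp add: FF_nontriv)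
  ultimately show ?thesis unfolding cdd_alt by auto
qed

lemma cdd_zero: "clarke_dir_deriv f z 0 = 0"
  unfolding cdd_alt Qf_def by (simp add: zero_ereal_def[symmetric]) (rule Limsup_const, rule FF_nontriv)

lemma snd_tendsto_FF: "((\<lambda>p. snd p) \<longlongrightarrow> 0) (FF z)"
  using filterlim_snd[of "at_right (0::real)" "nhds z"] unfolding filterlim_at by auto

lemma snd_pos_FF: "eventually (\<lambda>p. snd p > 0) (FF z)"
  using filterlim_snd[of "at_right (0::real)" "nhds z"] unfolding filterlim_at by (auto elim: eventually_mono)

lemma filterlim_shift:
  "filterlim (\<lambda>p. (fst p + snd p *\<^sub>R w, snd p)) (FF z) (FF z)"
proof (rule filterlim_Pair)
  have "((\<lambda>p. fst p + snd p *\<^sub>R w) \<longlongrightarrow> z + 0 *\<^sub>R w) (FF z)"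
    by (intro tendsto_intros snd_tendsto_FF) (rule filterlim_fst)
  then show "((\<lambda>p. fst p + snd p *\<^sub>R w) \<longlongrightarrow> z) (FF z)" by simp
  show "filterlim snd (at_right 0) (FF z)" by (rule filterlim_snd)
qed

lemma filterlim_scale:
  assumes "c > 0"
  shows "filterlim (\<lambda>p. (fst p, c * snd p)) (FF z) (FF z)"
proof (rule filterlim_Pair)
  show "((\<lambda>p. fst p) \<longlongrightarrow> z) (FF z)" by (rule filterlim_fst)
  have "((\<lambda>p. c * snd p) \<longlongrightarrow> c * 0) (FF z)"
    by (intro tendsto_intros snd_tendsto_FF)
  moreover have "eventually (\<lambda>p. c * snd p \<in> {0<..} \<and> c * snd p \<noteq> 0) (FF z)"
    using snd_pos_FF by eventually_elim (use assms in auto)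
  ultimately show "filterlim (\<lambda>p. c * snd p) (at_right 0) (FF z)"
    unfolding filterlim_at by simp
qed

lemma cdd_add:
  assumes "loc_lipschitz f"
  shows "clarke_dir_deriv f z (v1 + v2) \<le> clarke_dir_deriv f z v1 + clarke_dir_deriv f z v2"
proof -
  obtain a1 where a1: "clarke_dir_deriv f z v1 = ereal a1"
    using cdd_finite[OF assms, of z v1] by (cases "clarke_dir_deriv f z v1") auto
  obtain a2 where a2: "clarke_dir_deriv f z v2 = ereal a2"
    using cdd_finite[OF assms, of z v2] by (cases "clarke_dir_deriv f z v2") auto
  have "Limsup (FF z) (\<lambda>p. ereal (Qf f (v1 + v2) p)) \<le> ereal (a1 + a2)"
    unfolding Limsup_le_iff
  proof (intro allI impI)
    fix y assume y: "y > ereal (a1 + a2)"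
    show "eventually (\<lambda>p. y > ereal (Qf f (v1 + v2) p)) (FF z)"
    proof (cases y)
      case (real c)
      define d where "d = (c - a1 - a2) / 2"
      have d: "d > 0" using y real by (simp add: d_def)
      have e1: "eventually (\<lambda>p. ereal (Qf f v1 p) < ereal (a1 + d)) (FF z)"
        by (rule Limsup_lessD) (use a1 d in \<open>simp add: cdd_alt[symmetric]\<close>)
      have e2: "eventually (\<lambda>p. ereal (Qf f v2 p) < ereal (a2 + d)) (FF z)"
        by (rule Limsup_lessD) (use a2 d in \<open>simp add: cdd_alt[symmetric]\<close>)
      have e1': "eventually (\<lambda>p. ereal (Qf f v1 (fst p + snd p *\<^sub>R v2, snd p)) < ereal (a1 + d)) (FF z)"
        using filterlim_shift[of v2 z] e1 unfolding filterlim_iff by blast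
      from e1' e2 snd_pos_FF show ?thesis
      proof eventually_elim
        case (elim p)
        have "Qf f (v1 + v2) p = Qf f v1 (fst p + snd p *\<^sub>R v2, snd p) + Qf f v2 p"
          unfolding Qf_def by (simp add: scaleR_add_right add_divide_distrib[symmetric] add.assoc add.commute[of "snd p *\<^sub>R v1"])
        moreover have "d + d = c - a1 - a2" by (simp add: d_def)
        ultimately show ?case using elim real by simp
      qed
    qed (use y in simp_all)
  qed
  then show ?thesis using a1 a2 by (simp add: cdd_alt)
qed

lemma cdd_scale:
  assumes "loc_lipschitz f" and c: "c > 0"
  shows "clarke_dir_deriv f z (c *\<^sub>R v) \<le> ereal c * clarke_dir_deriv f z v"
proof -
  obtain a where a: "clarke_dir_deriv f z v = ereal a"
    using cdd_finite[OF assms(1), of z v] by (cases "clarke_dir_deriv f z v") auto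
  have "Limsup (FF z) (\<lambda>p. ereal (Qf f (c *\<^sub>R v) p)) \<le> ereal (c * a)"
    unfolding Limsup_le_iff
  proof (intro allI impI)
    fix y assume y: "y > ereal (c * a)"
    show "eventually (\<lambda>p. y > ereal (Qf f (c *\<^sub>R v) p)) (FF z)"
    proof (cases y)
      case (real r)
      have ra: "r / c > a" using y real c by (simp add: field_simps)
      have e1: "eventually (\<lambda>p. ereal (Qf f v p) < ereal (r / c)) (FF z)"
        by (rule Limsup_lessD) (use a ra in \<open>simp add: cdd_alt[symmetric]\<close>)
      have e1': "eventually (\<lambda>p. ereal (Qf f v (fst p, c * snd p)) < ereal (r / c)) (FF z)"
        using filterlim_scale[OF c, of z] e1 unfolding filterlim_iff by blast
      from e1' snd_pos_FF show ?thesis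
      proof eventually_elim
        case (elim p)
        have "Qf f (c *\<^sub>R v) p = c * Qf f v (fst p, c * snd p)"
          unfolding Qf_def using c elim by (simp add: field_simps)
        moreover have "c * Qf f v (fst p, c * snd p) < c * (r / c)"
          using elim c by (intro mult_strict_left_mono) auto
        ultimately show ?case using real c by simp
      qed
    qed (use y in simp_all)
  qed
  then show ?thesis using a by (simp add: cdd_alt)
qed



lemma sublinear_support:
  fixes \<phi> :: "'a::euclidean_space \<Rightarrow> real"
  assumes z: "\<phi> 0 = 0"
    and add: "\<And>v1 v2. \<phi> (v1 + v2) \<le> \<phi> v1 + \<phi> v2"
    and sc: "\<And>c v. c > 0 \<Longrightarrow> \<phi> (c *\<^sub>R v) \<le> c * \<phi> v"
  shows "\<exists>\<zeta>. (\<forall>v. \<zeta> \<bullet> v \<le> \<phi> v) \<and> \<phi> w \<le> \<zeta> \<bullet> w"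
proof -
  have sc0: "\<phi> (c *\<^sub>R v) \<le> c * \<phi> v" if "c \<ge> 0" for c v
    using sc[of c v] that z by (cases "c = 0") auto
  define S where "S = {p :: 'a \<times> real. \<phi> (fst p) \<le> snd p}"
  have cvx: "convex S"
  proof (rule convexI)
    fix x y :: "'a \<times> real" and u v :: real
    assume x: "x \<in> S" and y: "y \<in> S" and u: "0 \<le> u" and v: "0 \<le> v" and uv: "u + v = 1"
    have "\<phi> (u *\<^sub>R fst x + v *\<^sub>R fst y) \<le> \<phi> (u *\<^sub>R fst x) + \<phi> (v *\<^sub>R fst y)" by (rule add)
    also have "\<dots> \<le> u * \<phi> (fst x) + v * \<phi> (fst y)" using sc0[OF u] sc0[OF v] by (intro add_mono)
    also have "\<dots> \<le> u * snd x + v * snd y"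
    proof (rule add_mono)
      have "\<phi> (fst x) \<le> snd x" using x by (simp add: S_def)
      then show "u * \<phi> (fst x) \<le> u * snd x" using u by (rule mult_left_mono)
      have "\<phi> (fst y) \<le> snd y" using y by (simp add: S_def)
      then show "v * \<phi> (fst y) \<le> v * snd y" using v by (rule mult_left_mono)
    qed
    finally show "u *\<^sub>R x + v *\<^sub>R y \<in> S" by (simp add: S_def)
  qed
  define p0 where "p0 = (w, \<phi> w)"
  have p0S: "p0 \<in> S" by (simp add: S_def p0_def)
  have p0n: "p0 \<notin> rel_interior S"
  proof
    assume "p0 \<in> rel_interior S"
    then obtain e where e: "e > 0" and sub: "ball p0 e \<inter> affine hull S \<subseteq> S"
      unfolding rel_interior_ball by blast
    define q where "q = (w, \<phi> w - e/2)"
    have "dist p0 q = e / 2" using e unfolding p0_def q_def by (simp add: dist_Pair_Pair dist_real_def)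
    then have "q \<in> ball p0 e" using e by simp
    moreover have "q \<in> affine hull S"
    proof -
      have "(2::real) *\<^sub>R p0 + (-1) *\<^sub>R (w, \<phi> w + e/2) \<in> affine hull S"
      proof (rule mem_affine[OF affine_affine_hull])
        show "p0 \<in> affine hull S" using p0S by (rule hull_inc)
        have "(w, \<phi> w + e/2) \<in> S" using e by (simp add: S_def)
        then show "(w, \<phi> w + e/2) \<in> affine hull S" by (rule hull_inc)
      qed simp
      moreover have "(2::real) *\<^sub>R p0 + (-1) *\<^sub>R (w, \<phi> w + e/2) = q"
        by (simp add: q_def p0_def algebra_simps scaleR_2)
      ultimately show ?thesis by simp
    qed
    ultimately have "q \<in> S" using sub by blast
    then show False using e by (simp add: q_def S_def)
  qed
  obtain a where a0: "a \<noteq> 0" and a: "\<And>y. y \<in> S \<Longrightarrow> a \<bullet> p0 \<le> a \<bullet> y"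
    and "\<And>y. y \<in> rel_interior S \<Longrightarrow> a \<bullet> p0 < a \<bullet> y"
    by (rule supporting_hyperplane_rel_boundary[OF cvx p0S p0n]) (rule that)
  define \<alpha> where "\<alpha> = fst a"
  define \<beta> where "\<beta> = snd a"
  have key: "\<alpha> \<bullet> w + \<beta> * \<phi> w \<le> \<alpha> \<bullet> v + \<beta> * s" if "\<phi> v \<le> s" for v s
    using a[of "(v, s)"] that by (simp add: S_def p0_def \<alpha>_def \<beta>_def inner_prod_def)
  have b0: "\<beta> \<ge> 0" using key[of w "\<phi> w + 1"] by (simp add: distrib_left)
  have "\<beta> \<noteq> 0"
  proof
    assume "\<beta> = 0"
    then have "\<alpha> \<noteq> 0" using a0 by (auto simp: \<alpha>_def \<beta>_def prod_eq_iff)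
    have "\<alpha> \<bullet> w \<le> \<alpha> \<bullet> (w - \<alpha>)" using key[of "w - \<alpha>" "\<phi> (w - \<alpha>)"] \<open>\<beta> = 0\<close> by simp
    then have "\<alpha> \<bullet> \<alpha> \<le> 0" by (simp add: inner_diff_right)
    moreover have "0 < \<alpha> \<bullet> \<alpha>" using \<open>\<alpha> \<noteq> 0\<close> by (simp add: inner_gt_zero_iff)
    ultimately show False by linarith
  qed
  with b0 have bp: "\<beta> > 0" by simp
  define \<zeta> where "\<zeta> = - (1 / \<beta>) *\<^sub>R \<alpha>"
  have key2: "\<phi> w - \<zeta> \<bullet> w \<le> \<phi> v - \<zeta> \<bullet> v" for v
  proof -
    have "\<alpha> \<bullet> w + \<beta> * \<phi> w \<le> \<alpha> \<bullet> v + \<beta> * \<phi> v" using key[of v "\<phi> v"] by simp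
    then have "(\<alpha> \<bullet> w + \<beta> * \<phi> w) / \<beta> \<le> (\<alpha> \<bullet> v + \<beta> * \<phi> v) / \<beta>"
      using bp by (simp add: divide_right_mono)
    then show ?thesis using bp by (simp add: \<zeta>_def add_divide_distrib)
  qed
  have sub: "\<zeta> \<bullet> v \<le> \<phi> v" for v
  proof (rule ccontr)
    assume "\<not> \<zeta> \<bullet> v \<le> \<phi> v"
    then have d: "\<phi> v - \<zeta> \<bullet> v < 0" by simp
    define c where "c = \<phi> w - \<zeta> \<bullet> w"
    define l where "l = (\<bar>c\<bar> + 1) / (\<zeta> \<bullet> v - \<phi> v)"
    have l: "l > 0" using d by (simp add: l_def)
    have "c \<le> \<phi> (l *\<^sub>R v) - \<zeta> \<bullet> (l *\<^sub>R v)" using key2[of "l *\<^sub>R v"] by (simp add: c_def)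
    also have "\<dots> \<le> l * \<phi> v - l * (\<zeta> \<bullet> v)" using sc[OF l, of v] by simp
    also have "\<dots> = - (l * (\<zeta> \<bullet> v - \<phi> v))" by (simp add: algebra_simps)
    also have "l * (\<zeta> \<bullet> v - \<phi> v) = \<bar>c\<bar> + 1" using d by (simp add: l_def)
    finally show False by simp
  qed
  have "\<phi> w \<le> \<zeta> \<bullet> w" using key2[of 0] z by simp
  with sub show ?thesis by blast
qed



lemma cdd_bound:
  assumes spb: "SPB f R1 R2 m"
  shows "clarke_dir_deriv f z w \<le> ereal ((R1 * norm z ^ m + R2) * norm w)"
proof -
  have ll: "loc_lipschitz f" using spb by (simp add: SPB_def)
  define \<phi> where "\<phi> v = real_of_ereal (clarke_dir_deriv f z v)" for v
  have e: "clarke_dir_deriv f z v = ereal (\<phi> v)" for v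
    using cdd_finite[OF ll, of z v] by (cases "clarke_dir_deriv f z v") (auto simp: \<phi>_def)
  have "\<exists>\<zeta>. (\<forall>v. \<zeta> \<bullet> v \<le> \<phi> v) \<and> \<phi> w \<le> \<zeta> \<bullet> w"
  proof (rule sublinear_support)
    show "\<phi> 0 = 0" using cdd_zero[of f z] by (simp add: \<phi>_def)
    show "\<phi> (v1 + v2) \<le> \<phi> v1 + \<phi> v2" for v1 v2
      using cdd_add[OF ll, of z v1 v2] by (simp add: e)
    show "\<phi> (c *\<^sub>R v) \<le> c * \<phi> v" if "c > 0" for c v
      using cdd_scale[OF ll that, of z v] by (simp add: e)
  qed
  then obtain \<zeta> where sub: "\<And>v. \<zeta> \<bullet> v \<le> \<phi> v" and w: "\<phi> w \<le> \<zeta> \<bullet> w" by blast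
  have "\<zeta> \<in> clarke_subdiff f z" using sub by (simp add: clarke_subdiff_def e)
  then have nz: "norm \<zeta> \<le> R1 * norm z ^ m + R2" using spb by (simp add: SPB_def)
  have "\<phi> w \<le> norm \<zeta> * norm w" using w norm_cauchy_schwarz[of \<zeta> w] by linarith
  also have "\<dots> \<le> (R1 * norm z ^ m + R2) * norm w" using nz by (intro mult_right_mono) auto
  finally show ?thesis by (simp add: e)
qed

lemma dini_mono:
  fixes h :: "real \<Rightarrow> real"
  assumes cont: "continuous_on {0..1} h"
    and dini: "\<And>t c. 0 \<le> t \<Longrightarrow> t < 1 \<Longrightarrow> c > M \<Longrightarrow> \<exists>d>0. \<forall>s. 0 < s \<and> s < d \<longrightarrow> h (t + s) - h t < c * s"
  shows "h 1 - h 0 \<le> M"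
proof (rule field_le_epsilon)
  fix \<epsilon> :: real assume \<epsilon>: "\<epsilon> > 0"
  define g where "g t = h t - h 0 - (M + \<epsilon>) * t" for t
  define A where "A = {0..1} \<inter> g -` {..0}"
  have gc: "continuous_on {0..1} g" unfolding g_def by (intro continuous_intros cont)
  have cA: "closed A" unfolding A_def by (intro continuous_closed_preimage gc) auto
  have A0: "0 \<in> A" by (simp add: A_def g_def)
  have bA: "bdd_above A" unfolding A_def by (rule bdd_aboveI[of _ 1]) auto
  define c where "c = Sup A"
  have cA': "c \<in> A" unfolding c_def using closed_contains_Sup[OF _ bA cA] A0 by blast
  then have c01: "0 \<le> c" "c \<le> 1" and gc0: "g c \<le> 0" by (auto simp: A_def)
  have "c = 1"
  proof (rule ccontr)
    assume "c \<noteq> 1"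
    with c01 have c1: "c < 1" by simp
    obtain d where d: "d > 0" and hd: "\<And>s. 0 < s \<and> s < d \<Longrightarrow> h (c + s) - h c < (M + \<epsilon>) * s"
      using dini[OF c01(1) c1, of "M + \<epsilon>"] \<epsilon> by auto
    define s where "s = min (d/2) (1 - c)"
    have s: "0 < s" "s < d" "c + s \<le> 1" using d c1 by (auto simp: s_def)
    have "g (c + s) < g c" using hd[of s] s by (simp add: g_def algebra_simps)
    then have "c + s \<in> A" using gc0 s c01 by (simp add: A_def)
    then have "c + s \<le> c" unfolding c_def by (rule cSup_upper[OF _ bA])
    then show False using s by simp
  qed
  then have "g 1 \<le> 0" using gc0 by simp
  then show "h 1 - h 0 \<le> M + \<epsilon>" by (simp add: g_def)
qed



lemma mvt_dir:
  assumes spb: "SPB f R1 R2 m"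
    and bnd: "\<And>t. 0 \<le> t \<Longrightarrow> t \<le> 1 \<Longrightarrow> (R1 * norm (x + t *\<^sub>R v) ^ m + R2) * norm v \<le> M"
  shows "f (x + v) - f x \<le> M"
proof -
  have ll: "loc_lipschitz f" using spb by (simp add: SPB_def)
  define h where "h t = f (x + t *\<^sub>R v)" for t
  have fc: "continuous_on UNIV f" by (rule loc_lip_cont[OF ll])
  have hc: "continuous_on {0..1} h" unfolding h_def
    by (rule continuous_on_compose2[OF fc]) (auto intro!: continuous_intros)
  have "h 1 - h 0 \<le> M"
  proof (rule dini_mono[OF hc])
    fix t c :: real assume t0: "0 \<le> t" and t1: "t < 1" and c: "c > M"
    define z where "z = x + t *\<^sub>R v"
    have "clarke_dir_deriv f z v \<le> ereal ((R1 * norm z ^ m + R2) * norm v)" by (rule cdd_bound[OF spb])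
    also have "\<dots> \<le> ereal M" using bnd[OF t0] t1 by (simp add: z_def)
    also have "\<dots> < ereal c" using c by simp
    finally have "Limsup (FF z) (\<lambda>p. ereal (Qf f v p)) < ereal c" by (simp add: cdd_alt)
    then have "eventually (\<lambda>p. ereal (Qf f v p) < ereal c) (FF z)" by (rule Limsup_lessD)
    then obtain Pf Pg where Pf: "eventually Pf (nhds z)" and Pg: "eventually Pg (at_right (0::real))"
      and P: "\<And>y s. Pf y \<Longrightarrow> Pg s \<Longrightarrow> ereal (Qf f v (y, s)) < ereal c"
      unfolding eventually_prod_filter by blast
    have Pfz: "Pf z" using Pf by (rule eventually_nhds_x_imp_x)
    obtain b where b: "b > 0" and Pgb: "\<And>s. 0 < s \<Longrightarrow> s < b \<Longrightarrow> Pg s"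
      using Pg unfolding eventually_at_right_field by auto
    show "\<exists>d>0. \<forall>s. 0 < s \<and> s < d \<longrightarrow> h (t + s) - h t < c * s"
    proof (intro exI[of _ b] conjI allI impI b)
      fix s assume s: "0 < s \<and> s < b"
      then have "(f (z + s *\<^sub>R v) - f z) / s < c" using P[OF Pfz Pgb] by (simp add: Qf_def)
      then have "f (z + s *\<^sub>R v) - f z < c * s" using s by (simp add: pos_divide_less_eq)
      moreover have "h (t + s) = f (z + s *\<^sub>R v)" by (simp add: h_def z_def scaleR_add_left add.assoc)
      moreover have "h t = f z" by (simp add: h_def z_def)
      ultimately show "h (t + s) - h t < c * s" by simp
    qed
  qed
  then show ?thesis by (simp add: h_def)
qed

lemma mvt:
  assumes spb: "SPB f R1 R2 m"
  shows "\<bar>f y - f x\<bar> \<le> (R1 * (norm x + norm (y - x)) ^ m + R2) * norm (y - x)"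
proof -
  have R1: "R1 \<ge> 0" using spb by (simp add: SPB_def)
  define M where "M = (R1 * (norm x + norm (y - x)) ^ m + R2) * norm (y - x)"
  have kmono: "(R1 * norm z ^ m + R2) * norm (y - x) \<le> M" if "norm z \<le> norm x + norm (y - x)" for z
  proof -
    have "norm z ^ m \<le> (norm x + norm (y - x)) ^ m" using that by (intro power_mono) auto
    then have "R1 * norm z ^ m \<le> R1 * (norm x + norm (y - x)) ^ m" using R1 by (rule mult_left_mono)
    then show ?thesis unfolding M_def by (intro mult_right_mono) auto
  qed
  have 1: "f (x + (y - x)) - f x \<le> M"
  proof (rule mvt_dir[OF spb])
    fix t :: real assume t: "0 \<le> t" "t \<le> 1"
    have "norm (x + t *\<^sub>R (y - x)) \<le> norm x + norm (t *\<^sub>R (y - x))" by (rule norm_triangle_ineq)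
    also have "norm (t *\<^sub>R (y - x)) = t * norm (y - x)" using t by simp
    also have "t * norm (y - x) \<le> norm (y - x)" using t by (simp add: mult_left_le_one_le)
    finally show "(R1 * norm (x + t *\<^sub>R (y - x)) ^ m + R2) * norm (y - x) \<le> M"
      by (intro kmono) simp
  qed
  have 2: "f (y + (x - y)) - f y \<le> M"
  proof (rule mvt_dir[OF spb])
    fix t :: real assume t: "0 \<le> t" "t \<le> 1"
    have e: "y + t *\<^sub>R (x - y) = x + (1 - t) *\<^sub>R (y - x)" by (simp add: algebra_simps)
    have "norm (x + (1 - t) *\<^sub>R (y - x)) \<le> norm x + norm ((1 - t) *\<^sub>R (y - x))" by (rule norm_triangle_ineq)
    also have "norm ((1 - t) *\<^sub>R (y - x)) = (1 - t) * norm (y - x)" using t by simp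
    also have "(1 - t) * norm (y - x) \<le> norm (y - x)" using t by (simp add: mult_left_le_one_le)
    finally have "norm (y + t *\<^sub>R (x - y)) \<le> norm x + norm (y - x)" unfolding e by simp
    then have "(R1 * norm (y + t *\<^sub>R (x - y)) ^ m + R2) * norm (y - x) \<le> M" by (rule kmono)
    then show "(R1 * norm (y + t *\<^sub>R (x - y)) ^ m + R2) * norm (x - y) \<le> M"
      by (simp add: norm_minus_commute)
  qed
  from 1 2 show ?thesis by (simp add: M_def abs_le_iff)
qed

lemma power_sum_le:
  fixes a b :: real
  assumes a: "a \<ge> 0" and b: "b \<ge> 0" and m: "m \<ge> 1"
  shows "(a + b) ^ m \<le> 2 ^ (m - 1) * (a ^ m + b ^ m)"
  using m
proof (induction m rule: dec_induct)
  case base then show ?case by simp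
next
  case (step k)
  have cheb: "(a + b) * (a ^ k + b ^ k) \<le> 2 * (a ^ Suc k + b ^ Suc k)"
  proof -
    have "0 \<le> (a ^ k - b ^ k) * (a - b)"
    proof (cases "a \<le> b")
      case True
      then have "a ^ k \<le> b ^ k" using a by (intro power_mono) auto
      then show ?thesis using True by (intro mult_nonpos_nonpos) auto
    next
      case False
      then have "b ^ k \<le> a ^ k" using b by (intro power_mono) auto
      then show ?thesis using False by (intro mult_nonneg_nonneg) auto
    qed
    then show ?thesis by (simp add: algebra_simps)
  qed
  have "(a + b) ^ Suc k = (a + b) * (a + b) ^ k" by simp
  also have "\<dots> \<le> (a + b) * (2 ^ (k - 1) * (a ^ k + b ^ k))"
    using step.IH a b by (intro mult_left_mono) auto
  also have "\<dots> = 2 ^ (k - 1) * ((a + b) * (a ^ k + b ^ k))" by (simp add: mult_ac)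
  also have "\<dots> \<le> 2 ^ (k - 1) * (2 * (a ^ Suc k + b ^ Suc k))"
    using cheb by (intro mult_left_mono) auto
  also have "\<dots> = 2 ^ (Suc k - 1) * (a ^ Suc k + b ^ Suc k)"
    using step.hyps by (cases k) auto
  finally show ?case .
qed

lemma power_sum_le_R1:
  fixes a b R1 :: real
  assumes a: "a \<ge> 0" and b: "b \<ge> 0" and R1: "R1 \<ge> 0" and m0: "R1 = 0 \<longleftrightarrow> m = 0"
  shows "R1 * (a + b) ^ m \<le> 2 powr (real m - 1) * R1 * (a ^ m + b ^ m)"
proof (cases "m = 0")
  case True then show ?thesis using m0 by simp
next
  case False
  then have m: "m \<ge> 1" by simp
  have "2 powr (real m - 1) = 2 ^ (m - 1)"
    using m by (simp add: powr_realpow[symmetric] of_nat_diff)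
  have "R1 * (a + b) ^ m \<le> R1 * (2 ^ (m - 1) * (a ^ m + b ^ m))"
    using power_sum_le[OF a b m] R1 by (rule mult_left_mono)
  also have "\<dots> = 2 powr (real m - 1) * R1 * (a ^ m + b ^ m)"
    using \<open>2 powr (real m - 1) = 2 ^ (m - 1)\<close> by simp
  finally show ?thesis .
qed



lemma gauss_int_pow:
  assumes k: "k \<ge> 1"
  shows "integrable (std_gaussian::'a::euclidean_space measure) (\<lambda>u. norm u ^ k)"
    and "(\<integral>u. norm u ^ k \<partial>(std_gaussian::'a measure)) \<le> (real k + real DIM('a)) powr (real k / 2)"
proof -
  have le: "(\<integral>\<^sup>+u. ennreal (norm u ^ k) \<partial>(std_gaussian::'a measure)) \<le> ennreal ((real k + real DIM('a)) powr (real k / 2))"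
    by (rule gauss_moment[OF k])
  show int: "integrable (std_gaussian::'a measure) (\<lambda>u. norm u ^ k)"
  proof (rule integrableI_bounded)
    show "(\<lambda>u. norm u ^ k) \<in> borel_measurable (std_gaussian::'a measure)" by measurable
    have "(\<integral>\<^sup>+u. ennreal (norm (norm u ^ k)) \<partial>(std_gaussian::'a measure)) = (\<integral>\<^sup>+u. ennreal (norm u ^ k) \<partial>(std_gaussian::'a measure))"
      by simp
    also have "\<dots> < \<infinity>" using le by (simp add: le_less_trans)
    finally show "(\<integral>\<^sup>+u. ennreal (norm (norm u ^ k)) \<partial>(std_gaussian::'a measure)) < \<infinity>" .
  qed
  have "ennreal (\<integral>u. norm u ^ k \<partial>(std_gaussian::'a measure)) = (\<integral>\<^sup>+u. ennreal (norm u ^ k) \<partial>(std_gaussian::'a measure))"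
    by (rule nn_integral_eq_integral[symmetric]) (use int in auto)
  with le have "ennreal (\<integral>u. norm u ^ k \<partial>(std_gaussian::'a measure)) \<le> ennreal ((real k + real DIM('a)) powr (real k / 2))"
    by simp
  then show "(\<integral>u. norm u ^ k \<partial>(std_gaussian::'a measure)) \<le> (real k + real DIM('a)) powr (real k / 2)"
    by (subst (asm) ennreal_le_iff) simp_all
qed

lemma gauss_norm_sq:
  "(\<integral>u. (norm u)\<^sup>2 \<partial>(std_gaussian::'a::euclidean_space measure)) = real DIM('a)"
proof -
  have int: "integrable (std_gaussian::'a measure) (\<lambda>u. norm u ^ 2)" by (rule gauss_int_pow) simp
  have "ennreal (\<integral>u. (norm u)\<^sup>2 \<partial>(std_gaussian::'a measure)) = (\<integral>\<^sup>+u. ennreal ((norm u)\<^sup>2) \<partial>(std_gaussian::'a measure))"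
    by (rule nn_integral_eq_integral[symmetric]) (use int in auto)
  also have "\<dots> = ennreal (real DIM('a))" by (rule gauss_second)
  finally show ?thesis by (simp add: ennreal_inj)
qed

lemma gauss_norm:
  "(\<integral>u. norm u \<partial>(std_gaussian::'a::euclidean_space measure)) \<le> sqrt (real DIM('a))"
proof -
  interpret P: prob_space "std_gaussian::'a measure" by (rule prob_space_std_gaussian)
  define d where "d = real DIM('a)"
  have d: "d > 0" by (simp add: d_def)
  have sd: "sqrt d > 0" using d by simp
  have int1: "integrable (std_gaussian::'a measure) (\<lambda>u. norm u ^ 1)" by (rule gauss_int_pow) simp
  have int2: "integrable (std_gaussian::'a measure) (\<lambda>u. norm u ^ 2)" by (rule gauss_int_pow) simp
  have pt: "norm u \<le> ((norm u)\<^sup>2 + d) / (2 * sqrt d)" for u :: 'a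
  proof -
    have "0 \<le> (norm u - sqrt d)\<^sup>2" by simp
    then have "2 * sqrt d * norm u \<le> (norm u)\<^sup>2 + d"
      using d by (simp add: power2_diff algebra_simps)
    then show ?thesis using sd by (simp add: pos_le_divide_eq mult_ac)
  qed
  have "(\<integral>u. norm u \<partial>(std_gaussian::'a measure)) \<le> (\<integral>u. ((norm u)\<^sup>2 + d) / (2 * sqrt d) \<partial>(std_gaussian::'a measure))"
    by (rule integral_mono) (use int1 int2 pt in auto)
  also have "\<dots> = ((\<integral>u. (norm u)\<^sup>2 \<partial>(std_gaussian::'a measure)) + d) / (2 * sqrt d)"
    using int2 by (simp add: P.prob_space)
  also have "\<dots> = (d + d) / (2 * sqrt d)" by (simp add: gauss_norm_sq d_def)
  also have "\<dots> = sqrt d" using d by (simp add: field_simps real_sqrt_mult[symmetric])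
  finally show ?thesis by (simp add: d_def)
qed

theorem lemma4p2:
  fixes f :: "'a::euclidean_space \<Rightarrow> real" and R1 R2 \<sigma> :: real and m :: nat
  assumes "SPB f R1 R2 m" and "\<sigma> > 0"
  shows "\<forall>x. \<bar>gauss_smooth f \<sigma> x - f x\<bar> \<le>
    ((2 powr (real m - 1) * R1 * norm x ^ m + R2) * sqrt (real DIM('a))
     + 2 powr (real m - 1) * R1 * \<sigma> ^ m * (real m + 1 + real DIM('a)) powr ((real m + 1) / 2)) * \<sigma>"
proof
  fix x :: 'a
  note spb = assms(1)
  have sig: "\<sigma> > 0" by (rule assms(2))
  interpret P: prob_space "std_gaussian::'a measure" by (rule prob_space_std_gaussian)
  have R1: "R1 \<ge> 0" and R2: "R2 > 0" and m0: "R1 = 0 \<longleftrightarrow> m = 0" and ll: "loc_lipschitz f"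
    using spb by (auto simp: SPB_def)
  have fm[measurable]: "f \<in> borel_measurable borel"
    by (rule borel_measurable_continuous_onI[OF loc_lip_cont[OF ll]])
  define c where "c = 2 powr (real m - 1)"
  have c: "c \<ge> 0" by (simp add: c_def)
  define A where "A = c * R1 * norm x ^ m + R2"
  define B where "B = c * R1 * \<sigma> ^ m"
  have A: "A \<ge> 0" using c R1 R2 by (simp add: A_def)
  have B: "B \<ge> 0" using c R1 sig by (simp add: B_def)
  define g where "g u = f (x + \<sigma> *\<^sub>R u) - f x" for u
  define G where "G u = A * \<sigma> * norm u ^ 1 + B * \<sigma> * norm u ^ (m + 1)" for u :: 'a
  have intG: "integrable (std_gaussian::'a measure) G"
    unfolding G_def using gauss_int_pow(1)[of 1] gauss_int_pow(1)[of "m + 1"] by auto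
  have gm: "g \<in> borel_measurable (std_gaussian::'a measure)" unfolding g_def by measurable
  have pt: "\<bar>g u\<bar> \<le> G u" for u
  proof -
    have "\<bar>g u\<bar> \<le> (R1 * (norm x + norm ((x + \<sigma> *\<^sub>R u) - x)) ^ m + R2) * norm ((x + \<sigma> *\<^sub>R u) - x)"
      unfolding g_def by (rule mvt[OF spb])
    also have "norm ((x + \<sigma> *\<^sub>R u) - x) = \<sigma> * norm u" using sig by simp
    also have "R1 * (norm x + \<sigma> * norm u) ^ m \<le> c * R1 * (norm x ^ m + (\<sigma> * norm u) ^ m)"
      unfolding c_def by (rule power_sum_le_R1[OF _ _ R1 m0]) (use sig in auto)
    then have "(R1 * (norm x + \<sigma> * norm u) ^ m + R2) * (\<sigma> * norm u)
        \<le> (c * R1 * (norm x ^ m + (\<sigma> * norm u) ^ m) + R2) * (\<sigma> * norm u)"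
      using sig by (intro mult_right_mono) auto
    also have "\<dots> = G u"
      by (simp add: G_def A_def B_def algebra_simps power_mult_distrib)
    finally show ?thesis .
  qed
  have intg: "integrable (std_gaussian::'a measure) g"
    by (rule Bochner_Integration.integrable_bound[OF intG gm]) (intro AE_I2, metis pt abs_ge_self order_trans real_norm_def)
  have "gauss_smooth f \<sigma> x - f x = (\<integral>u. g u \<partial>(std_gaussian::'a measure))"
  proof -
    have intf: "integrable (std_gaussian::'a measure) (\<lambda>u. f (x + \<sigma> *\<^sub>R u))"
      using Bochner_Integration.integrable_add[OF intg P.integrable_const[of "f x"]] unfolding g_def by simp
    show ?thesis unfolding gauss_smooth_def g_def using intf by (simp add: P.prob_space)
  qed
  also have "\<bar>\<dots>\<bar> \<le> (\<integral>u. G u \<partial>(std_gaussian::'a measure))"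
    by (rule integral_abs_bound_integral[OF intg intG]) (use pt in auto)
  also have "\<dots> = A * \<sigma> * (\<integral>u. norm u ^ 1 \<partial>(std_gaussian::'a measure)) + B * \<sigma> * (\<integral>u. norm u ^ (m + 1) \<partial>(std_gaussian::'a measure))"
  proof -
    have i1: "integrable (std_gaussian::'a measure) (\<lambda>u. norm u ^ 1)" by (rule gauss_int_pow) simp
    have i2: "integrable (std_gaussian::'a measure) (\<lambda>u. norm u ^ (m + 1))" by (rule gauss_int_pow) simp
    have "(\<integral>u. G u \<partial>(std_gaussian::'a measure)) = (\<integral>u. A * \<sigma> * norm u ^ 1 \<partial>(std_gaussian::'a measure)) + (\<integral>u. B * \<sigma> * norm u ^ (m + 1) \<partial>(std_gaussian::'a measure))"
      unfolding G_def by (rule Bochner_Integration.integral_add) (use i1 i2 in auto)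
    also have "\<dots> = A * \<sigma> * (\<integral>u. norm u ^ 1 \<partial>(std_gaussian::'a measure)) + B * \<sigma> * (\<integral>u. norm u ^ (m + 1) \<partial>(std_gaussian::'a measure))"
      by (simp only: Bochner_Integration.integral_mult_right[OF i1] Bochner_Integration.integral_mult_right[OF i2])
    finally show ?thesis .
  qed
  also have "\<dots> \<le> A * \<sigma> * sqrt (real DIM('a)) + B * \<sigma> * (real (m + 1) + real DIM('a)) powr (real (m + 1) / 2)"
    using gauss_norm gauss_int_pow(2)[of "m + 1"] A B sig
    by (intro add_mono mult_left_mono) auto
  also have "\<dots> = ((2 powr (real m - 1) * R1 * norm x ^ m + R2) * sqrt (real DIM('a))
     + 2 powr (real m - 1) * R1 * \<sigma> ^ m * (real m + 1 + real DIM('a)) powr ((real m + 1) / 2)) * \<sigma>"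
    by (simp add: A_def B_def c_def algebra_simps)
  finally show "\<bar>gauss_smooth f \<sigma> x - f x\<bar> \<le>
    ((2 powr (real m - 1) * R1 * norm x ^ m + R2) * sqrt (real DIM('a))
     + 2 powr (real m - 1) * R1 * \<sigma> ^ m * (real m + 1 + real DIM('a)) powr ((real m + 1) / 2)) * \<sigma>" .
qed


end
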